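(* Let $\Gamma>1$ and let $(\rho_L,u_L,p_L)$, $(\rho_R,u_R,p_R)$ be two states with $\rho_L,\rho_R,p_L,p_R>0$ and $|u_L|,|u_R|<1$. Set $W_{L}=1/\sqrt{1-u_{L}^2}$, $W_{R}=1/\sqrt{1-u_{R}^2}$, and $z_1=\rho$, $z_2=\rho/p$, $z_3=u$ (evaluated at the left and right states). Define \[ \tilde F_1=\{\!\{z_1\}\!\}^{\ln}\{\!\{uW\}\!\}, \qquad \alpha = 1+\frac{1}{(\Gamma-1)\{\!\{z_2\}\!\}^{\ln}}, \] \[ Q=\{\!\{z_2\}\!\}\{\!\{W\}\!\}^2+\{\!\{z_2\}\!\}\{\!\{z_3\}\!\}\{\!\{W\}\!\}\,\mathcal L(z_3)-\{\!\{z_2\}\!\}\{\!\{uW\}\!\}\,\mathcal L(z_3), \] \[ \tilde F_2=Q^{-1}\Big[\alpha\{\!\{z_2\}\!\}\mathcal L(z_3)\tilde F_1+\{\!\{z_1\}\!\}\{\!\{W\}\!\}^2+\{\!\{z_1\}\!\}\{\!\{z_3\}\!\}\{\!\{W\}\!\}\mathcal L(z_3)\Big], \] \[ \tilde F_3=Q^{-1}\Big[\{\!\{z_1\}\!\}\{\!\{W\}\!\}\{\!\{uW\}\!\}+\{\!\{z_1\}\!\}\{\!\{z_3\}\!\}\{\!\{uW\}\!\}\mathcal L(z_3)+\alpha\tilde F_1\big(\{\!\{z_2\}\!\}\{\!\{W\}\!\}+\{\!\{z_2\}\!\}\{\!\{z_3\}\!\}\mathcal L(z_3)\big)\Big]. \]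 Then $Q=\{\!\{z_2\}\!\}W_LW_R>0$, so $\tilde{\mathbf F}=(\tilde F_1,\tilde F_2,\tilde F_3)^{T}$ is well defined, and it satisfies the entropy conservation condition \[ [\![\mathbf V]\!]^{T}\tilde{\mathbf F}=[\![\psi]\!]. \] Moreover $\tilde{\mathbf F}$ is consistent: if $(\rho_L,u_L,p_L)=(\rho_R,u_R,p_R)=(\rho,u,p)$, then $\tilde{\mathbf F}=(\rho W u,\ \rho h W^2u^2+p,\ \rho h W^2 u)^T$, which is the one-dimensional special relativistic hydrodynamics flux $\mathbf F(\mathbf U)$ evaluated at that state.
   Context: One-dimensional special relativistic hydrodynamics (units with speed of light $1$) with ideal equation of state $p=(\Gamma-1)\rho e$: conservative variables $\mathbf U=(D,m,E)^T$ with $D=\rho W$, $m=\rho hW^2u$, $E=\rho hW^2-p$, flux $\mathbf F(\mathbf U)=(Du,\,mu+p,\,m)^T$, where $W=1/\sqrt{1-u^2}$ is the Lorentz factor and $h=1+\Gamma p/((\Gamma-1)\rho)$ the specific enthalpy. Thermodynamic entropy $S=\ln p-\Gamma\ln\rho$; entropy variables $\mathbf V=\big(\frac{\Gamma-S}{\Gamma-1}+\frac{\rho}{p},\ \frac{\rho W u}{p},\ -\frac{\rho W}{p}\big)^T$ and potential $\psi=\rho W u$ (these correspond to the entropy pair $\eta=-\rho WS/(\Gamma-1)$, $q=-\rho uWS/(\Gamma-1)$). For a quantity $a$ taking values $a_L,a_R$ at the two states: jump $[\![a]\!]=a_R-a_L$; arithmetic mean $\{\!\{a\}\!\}=(a_L+a_R)/2$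 (so e.g. $\{\!\{uW\}\!\}=(u_LW_L+u_RW_R)/2$); for positive $a$, logarithmic mean $\{\!\{a\}\!\}^{\ln}=[\![a]\!]/[\![\ln a]\!]$ if $a_L\neq a_R$ and $\{\!\{a\}\!\}^{\ln}=a_L$ if $a_L=a_R$. The "Lorentz mean" is $\mathcal L(u)=\dfrac{u_L+u_R}{\sqrt{1-u_L^2}\sqrt{1-u_R^2}\big(\sqrt{1-u_L^2}+\sqrt{1-u_R^2}\big)}$, which satisfies $[\![W]\!]=\mathcal L(u)[\![u]\!]$; $\mathcal L(z_3)$ means $\mathcal L(u)$. *)

theory Defs
  imports Complex_Main
begin

definition lorentzW :: "real \<Rightarrow> real" where
  "lorentzW u = 1 / sqrt (1 - u\<^sup>2)"

definition amean :: "real \<Rightarrow> real \<Rightarrow> real" where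
  "amean aL aR = (aL + aR) / 2"

definition lnmean :: "real \<Rightarrow> real \<Rightarrow> real" where
  "lnmean aL aR = (if aL = aR then aL else (aR - aL) / (ln aR - ln aL))"

definition lorentz_mean :: "real \<Rightarrow> real \<Rightarrow> real" where
  "lorentz_mean uL uR = (uL + uR) /
     (sqrt (1 - uL\<^sup>2) * sqrt (1 - uR\<^sup>2) * (sqrt (1 - uL\<^sup>2) + sqrt (1 - uR\<^sup>2)))"

definition enthalpy :: "real \<Rightarrow> real \<Rightarrow> real \<Rightarrow> real" where
  "enthalpy \<Gamma> \<rho> p = 1 + \<Gamma> * p / ((\<Gamma> - 1) * \<rho>)"

definition entropyS :: "real \<Rightarrow> real \<Rightarrow> real \<Rightarrow> real" where
  "entropyS \<Gamma> \<rho> p = ln p - \<Gamma> * ln \<rho>"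

definition entV1 :: "real \<Rightarrow> real \<Rightarrow> real \<Rightarrow> real \<Rightarrow> real" where
  "entV1 \<Gamma> \<rho> u p = (\<Gamma> - entropyS \<Gamma> \<rho> p) / (\<Gamma> - 1) + \<rho> / p"
definition entV2 :: "real \<Rightarrow> real \<Rightarrow> real \<Rightarrow> real \<Rightarrow> real" where
  "entV2 \<Gamma> \<rho> u p = \<rho> * lorentzW u * u / p"
definition entV3 :: "real \<Rightarrow> real \<Rightarrow> real \<Rightarrow> real \<Rightarrow> real" where
  "entV3 \<Gamma> \<rho> u p = - (\<rho> * lorentzW u / p)"

definition potential :: "real \<Rightarrow> real \<Rightarrow> real \<Rightarrow> real" where
  "potential \<rho> u p = \<rho> * lorentzW u * u"

definition physflux :: "real \<Rightarrow> real \<Rightarrow> real \<Rightarrow> real \<Rightarrow> real \<times> real \<times> real" where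
  "physflux \<Gamma> \<rho> u p =
     (let W = lorentzW u; h = enthalpy \<Gamma> \<rho> p;
          D = \<rho> * W; m = \<rho> * h * W\<^sup>2 * u
      in (D * u, m * u + p, m))"

definition fluxQ :: "real \<Rightarrow> real \<Rightarrow> real \<Rightarrow> real \<Rightarrow> real \<Rightarrow> real \<Rightarrow> real" where
  "fluxQ \<rho>L uL pL \<rho>R uR pR =
     (let z2 = amean (\<rho>L / pL) (\<rho>R / pR); z3 = amean uL uR;
          Wm = amean (lorentzW uL) (lorentzW uR);
          uWm = amean (uL * lorentzW uL) (uR * lorentzW uR);
          Lm = lorentz_mean uL uR
      in z2 * Wm\<^sup>2 + z2 * z3 * Wm * Lm - z2 * uWm * Lm)"

definition fluxF1 :: "real \<Rightarrow> real \<Rightarrow> real \<Rightarrow> real \<Rightarrow> real \<Rightarrow> real \<Rightarrow> real" where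
  "fluxF1 \<rho>L uL pL \<rho>R uR pR =
     lnmean \<rho>L \<rho>R * amean (uL * lorentzW uL) (uR * lorentzW uR)"

definition fluxAlpha :: "real \<Rightarrow> real \<Rightarrow> real \<Rightarrow> real \<Rightarrow> real \<Rightarrow> real \<Rightarrow> real \<Rightarrow> real" where
  "fluxAlpha \<Gamma> \<rho>L uL pL \<rho>R uR pR = 1 + 1 / ((\<Gamma> - 1) * lnmean (\<rho>L / pL) (\<rho>R / pR))"

definition fluxF2 :: "real \<Rightarrow> real \<Rightarrow> real \<Rightarrow> real \<Rightarrow> real \<Rightarrow> real \<Rightarrow> real \<Rightarrow> real" where
  "fluxF2 \<Gamma> \<rho>L uL pL \<rho>R uR pR =
     (let z1 = amean \<rho>L \<rho>R; z2 = amean (\<rho>L / pL) (\<rho>R / pR); z3 = amean uL uR;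
          Wm = amean (lorentzW uL) (lorentzW uR);
          Lm = lorentz_mean uL uR;
          \<alpha> = fluxAlpha \<Gamma> \<rho>L uL pL \<rho>R uR pR;
          F1 = fluxF1 \<rho>L uL pL \<rho>R uR pR;
          Q = fluxQ \<rho>L uL pL \<rho>R uR pR
      in (\<alpha> * z2 * Lm * F1 + z1 * Wm\<^sup>2 + z1 * z3 * Wm * Lm) / Q)"

definition fluxF3 :: "real \<Rightarrow> real \<Rightarrow> real \<Rightarrow> real \<Rightarrow> real \<Rightarrow> real \<Rightarrow> real \<Rightarrow> real" where
  "fluxF3 \<Gamma> \<rho>L uL pL \<rho>R uR pR =
     (let z1 = amean \<rho>L \<rho>R; z2 = amean (\<rho>L / pL) (\<rho>R / pR); z3 = amean uL uR;
          Wm = amean (lorentzW uL) (lorentzW uR);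
          uWm = amean (uL * lorentzW uL) (uR * lorentzW uR);
          Lm = lorentz_mean uL uR;
          \<alpha> = fluxAlpha \<Gamma> \<rho>L uL pL \<rho>R uR pR;
          F1 = fluxF1 \<rho>L uL pL \<rho>R uR pR;
          Q = fluxQ \<rho>L uL pL \<rho>R uR pR
      in (z1 * Wm * uWm + z1 * z3 * uWm * Lm + \<alpha> * F1 * (z2 * Wm + z2 * z3 * Lm)) / Q)"

end

theory Submission
  imports Defs
begin

lemma sq_pos: "\<bar>u::real\<bar> < 1 \<Longrightarrow> sqrt (1 - u\<^sup>2) > 0 \<and> (sqrt (1 - u\<^sup>2))\<^sup>2 = 1 - u\<^sup>2"
proof -
  assume "\<bar>u\<bar> < 1"
  hence "u\<^sup>2 < 1" by (simp add: abs_square_less_1)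
  thus ?thesis by simp
qed

lemma L_jump:
  assumes "\<bar>uL\<bar> < 1" "\<bar>uR\<bar> < 1"
  shows "lorentz_mean uL uR * (uR - uL) = lorentzW uR - lorentzW uL"
proof -
  define sL where "sL = sqrt (1 - uL\<^sup>2)"
  define sR where "sR = sqrt (1 - uR\<^sup>2)"
  have a: "sL > 0" "sL\<^sup>2 = 1 - uL\<^sup>2" using sq_pos[OF assms(1)] sL_def by auto
  have b: "sR > 0" "sR\<^sup>2 = 1 - uR\<^sup>2" using sq_pos[OF assms(2)] sR_def by auto
  have "lorentz_mean uL uR * (uR - uL) = (uL+uR)*(uR-uL) / (sL*sR*(sL+sR))"
    unfolding lorentz_mean_def sL_def sR_def by simp
  also have "(uL+uR)*(uR-uL) = (sL - sR)*(sL+sR)"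
    using a b by (simp add: algebra_simps power2_eq_square)
  also have "(sL - sR)*(sL+sR) / (sL*sR*(sL+sR)) = 1/sR - 1/sL"
  proof -
    have "sL + sR > 0" using a b by simp
    hence "(sL - sR)*(sL+sR) / (sL*sR*(sL+sR)) = (sL - sR) / (sL*sR)" by simp
    also have "\<dots> = 1/sR - 1/sL" using a b by (simp add: field_simps)
    finally show ?thesis .
  qed
  finally show ?thesis unfolding lorentzW_def sL_def sR_def .
qed

lemma lnmean_jump:
  assumes "a > 0" "b > 0"
  shows "lnmean a b * (ln b - ln a) = b - a"
proof (cases "a = b")
  case True thus ?thesis by (simp add: lnmean_def)
next
  case False
  hence "ln b \<noteq> ln a" using assms by simp
  thus ?thesis using False by (simp add: lnmean_def)
qed

lemma algA:
  fixes Q bm Wm z3 L uWm al F1 rm F2 F3 :: real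
  assumes Qd: "Q = bm*Wm\<^sup>2 + bm*z3*Wm*L - bm*uWm*L" and Q0: "Q \<noteq> 0"
    and F2d: "F2 = (al*bm*L*F1 + rm*Wm\<^sup>2 + rm*z3*Wm*L) / Q"
    and F3d: "F3 = (rm*Wm*uWm + rm*z3*uWm*L + al*F1*(bm*Wm + bm*z3*L)) / Q"
  shows "al*F1 + uWm*F2 - Wm*F3 = 0"
    and "bm*(Wm + z3*L)*F2 - bm*L*F3 - rm*(Wm + z3*L) = 0"
proof -
  have "Q*(al*F1 + uWm*F2 - Wm*F3) = al*F1*Q + uWm*(al*bm*L*F1 + rm*Wm\<^sup>2 + rm*z3*Wm*L)
      - Wm*(rm*Wm*uWm + rm*z3*uWm*L + al*F1*(bm*Wm + bm*z3*L))"
    using Q0 unfolding F2d F3d by (simp add: field_simps)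
  also have "\<dots> = 0" unfolding Qd by (simp add: algebra_simps power2_eq_square)
  finally show "al*F1 + uWm*F2 - Wm*F3 = 0" using Q0 by simp
  have "Q*(bm*(Wm + z3*L)*F2 - bm*L*F3 - rm*(Wm + z3*L)) =
     bm*(Wm + z3*L)*(al*bm*L*F1 + rm*Wm\<^sup>2 + rm*z3*Wm*L) - bm*L*(rm*Wm*uWm + rm*z3*uWm*L + al*F1*(bm*Wm + bm*z3*L))
      - rm*(Wm + z3*L)*Q"
    using Q0 unfolding F2d F3d by (simp add: field_simps)
  also have "\<dots> = 0" unfolding Qd by (simp add: algebra_simps power2_eq_square)
  finally show "bm*(Wm + z3*L)*F2 - bm*L*F3 - rm*(Wm + z3*L) = 0" using Q0 by simp
qed

lemma lnmean_nz:
  assumes "a > 0" "b > 0"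
  shows "lnmean a b \<noteq> 0"
  using lnmean_jump[OF assms] assms by (auto simp: lnmean_def split: if_splits)

theorem mainTheorem1:
  fixes \<Gamma> \<rho>L uL pL \<rho>R uR pR :: real
  assumes "\<Gamma> > 1"
    and "\<rho>L > 0" and "\<rho>R > 0" and "pL > 0" and "pR > 0"
    and "\<bar>uL\<bar> < 1" and "\<bar>uR\<bar> < 1"
  shows "fluxQ \<rho>L uL pL \<rho>R uR pR
           = amean (\<rho>L / pL) (\<rho>R / pR) * lorentzW uL * lorentzW uR
    \<and> fluxQ \<rho>L uL pL \<rho>R uR pR > 0
    \<and> (entV1 \<Gamma> \<rho>R uR pR - entV1 \<Gamma> \<rho>L uL pL) * fluxF1 \<rho>L uL pL \<rho>R uR pR
         + (entV2 \<Gamma> \<rho>R uR pR - entV2 \<Gamma> \<rho>L uL pL) * fluxF2 \<Gamma> \<rho>L uL pL \<rho>R uR pR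
         + (entV3 \<Gamma> \<rho>R uR pR - entV3 \<Gamma> \<rho>L uL pL) * fluxF3 \<Gamma> \<rho>L uL pL \<rho>R uR pR
         = potential \<rho>R uR pR - potential \<rho>L uL pL
    \<and> ((\<rho>L = \<rho>R \<and> uL = uR \<and> pL = pR) \<longrightarrow>
         (fluxF1 \<rho>L uL pL \<rho>R uR pR, fluxF2 \<Gamma> \<rho>L uL pL \<rho>R uR pR, fluxF3 \<Gamma> \<rho>L uL pL \<rho>R uR pR)
           = (\<rho>L * lorentzW uL * uL,
              \<rho>L * enthalpy \<Gamma> \<rho>L pL * (lorentzW uL)\<^sup>2 * uL\<^sup>2 + pL,
              \<rho>L * enthalpy \<Gamma> \<rho>L pL * (lorentzW uL)\<^sup>2 * uL)
         \<and> (fluxF1 \<rho>L uL pL \<rho>R uR pR, fluxF2 \<Gamma> \<rho>L uL pL \<rho>R uR pR, fluxF3 \<Gamma> \<rho>L uL pL \<rho>R uR pR)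
           = physflux \<Gamma> \<rho>L uL pL)"
proof -
  note G = assms(1) and pos = assms(2-5)
  define WL where "WL = lorentzW uL"
  define WR where "WR = lorentzW uR"
  define bL where "bL = \<rho>L / pL"
  define bR where "bR = \<rho>R / pR"
  define Lm where "Lm = lorentz_mean uL uR"
  define bm where "bm = amean bL bR"
  define rm where "rm = amean \<rho>L \<rho>R"
  define z3 where "z3 = amean uL uR"
  define Wm where "Wm = amean WL WR"
  define uWm where "uWm = amean (uL*WL) (uR*WR)"
  define al where "al = fluxAlpha \<Gamma> \<rho>L uL pL \<rho>R uR pR"
  define F1 where "F1 = fluxF1 \<rho>L uL pL \<rho>R uR pR"
  define Q where "Q = fluxQ \<rho>L uL pL \<rho>R uR pR"
  define F2 where "F2 = fluxF2 \<Gamma> \<rho>L uL pL \<rho>R uR pR"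
  define F3 where "F3 = fluxF3 \<Gamma> \<rho>L uL pL \<rho>R uR pR"
  have bpos: "bL > 0" "bR > 0" using pos by (auto simp: bL_def bR_def)
  have sL: "sqrt (1 - uL\<^sup>2) > 0 \<and> (sqrt (1 - uL\<^sup>2))\<^sup>2 = 1 - uL\<^sup>2" using sq_pos[OF assms(6)] .
  have sR: "sqrt (1 - uR\<^sup>2) > 0 \<and> (sqrt (1 - uR\<^sup>2))\<^sup>2 = 1 - uR\<^sup>2" using sq_pos[OF assms(7)] .
  have Wpos: "WL > 0" "WR > 0" using sL sR by (auto simp: WL_def WR_def lorentzW_def)
  have Lj: "Lm * (uR - uL) = WR - WL" using L_jump[OF assms(6,7)] by (simp add: Lm_def WL_def WR_def)
  have Qd: "Q = bm*Wm\<^sup>2 + bm*z3*Wm*Lm - bm*uWm*Lm"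
    by (simp add: Q_def fluxQ_def Let_def bm_def bL_def bR_def z3_def Wm_def WL_def WR_def uWm_def Lm_def)
  have F2d: "F2 = (al*bm*Lm*F1 + rm*Wm\<^sup>2 + rm*z3*Wm*Lm) / Q"
    by (simp add: F2_def fluxF2_def Let_def bm_def bL_def bR_def z3_def Wm_def WL_def WR_def uWm_def Lm_def
      rm_def al_def F1_def Q_def)
  have F3d: "F3 = (rm*Wm*uWm + rm*z3*uWm*Lm + al*F1*(bm*Wm + bm*z3*Lm)) / Q"
    by (simp add: F3_def fluxF3_def Let_def bm_def bL_def bR_def z3_def Wm_def WL_def WR_def uWm_def Lm_def
      rm_def al_def F1_def Q_def)
  have "z3*Wm - uWm = - (uR - uL)*(WR - WL)/4"
    by (simp add: z3_def Wm_def uWm_def amean_def field_simps)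
  note zeq = this
  have "Q = bm*Wm\<^sup>2 + bm*Lm*(z3*Wm - uWm)" unfolding Qd by (simp add: algebra_simps)
  also have "\<dots> = bm*(Wm\<^sup>2 - (Lm*(uR - uL))*(WR - WL)/4)" unfolding zeq by (simp add: field_simps)
  also have "\<dots> = bm*WL*WR" unfolding Lj by (simp add: Wm_def amean_def field_simps power2_eq_square)
  finally have Qeq: "Q = bm*WL*WR" .
  have Qpos: "Q > 0" unfolding Qeq using bpos Wpos by (simp add: bm_def amean_def)
  note AB = algA[OF Qd _ F2d F3d] 
  have A: "al*F1 + uWm*F2 - Wm*F3 = 0" using AB(1) Qpos by simp
  have B: "bm*(Wm + z3*Lm)*F2 - bm*Lm*F3 - rm*(Wm + z3*Lm) = 0" using AB(2) Qpos by simp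
  have lnp: "ln pL = ln \<rho>L - ln bL" "ln pR = ln \<rho>R - ln bR"
    using pos by (auto simp: bL_def bR_def ln_div)
  have V1j: "entV1 \<Gamma> \<rho>R uR pR - entV1 \<Gamma> \<rho>L uL pL
      = (ln \<rho>R - ln \<rho>L) + (ln bR - ln bL)/(\<Gamma> - 1) + (bR - bL)"
  proof -
    have g: "\<Gamma> - 1 \<noteq> 0" using G by simp
    have e: "entV1 \<Gamma> \<rho> u p = \<Gamma>/(\<Gamma> - 1) + ln \<rho> + ln b/(\<Gamma> - 1) + b"
      if "ln p = ln \<rho> - ln b" "b = \<rho>/p" for \<rho> u p b
    proof -
      have "\<Gamma> - entropyS \<Gamma> \<rho> p = \<Gamma> + (\<Gamma> - 1)*ln \<rho> + ln b"
        unfolding entropyS_def that(1) by (simp add: algebra_simps)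
      hence "(\<Gamma> - entropyS \<Gamma> \<rho> p)/(\<Gamma> - 1) = \<Gamma>/(\<Gamma> - 1) + ln \<rho> + ln b/(\<Gamma> - 1)"
        using g by (simp only: add_divide_distrib, simp)
      thus ?thesis unfolding entV1_def that(2) by simp
    qed
    show ?thesis using e[OF lnp(1) bL_def] e[OF lnp(2) bR_def] by (simp add: diff_divide_distrib)
  qed
  have lb: "lnmean bL bR * (ln bR - ln bL) = bR - bL" "lnmean bL bR \<noteq> 0"
    using lnmean_jump[OF bpos] lnmean_nz[OF bpos] by auto
  have lr: "lnmean \<rho>L \<rho>R * (ln \<rho>R - ln \<rho>L) = \<rho>R - \<rho>L"
    using lnmean_jump[OF pos(1,2)] .
  have aljump: "al*(bR - bL) = (bR - bL) + (ln bR - ln bL)/(\<Gamma> - 1)"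
  proof -
    have "al = 1 + 1/((\<Gamma> - 1) * lnmean bL bR)"
      by (simp add: al_def fluxAlpha_def bL_def bR_def)
    hence "al*(bR - bL) = (bR - bL) + lnmean bL bR * (ln bR - ln bL) / ((\<Gamma> - 1) * lnmean bL bR)"
      using lb by (simp add: algebra_simps)
    thus ?thesis using lb(2) G by simp
  qed
  have F1d: "F1 = lnmean \<rho>L \<rho>R * uWm"
    by (simp add: F1_def fluxF1_def uWm_def WL_def WR_def)
  have X1: "(entV1 \<Gamma> \<rho>R uR pR - entV1 \<Gamma> \<rho>L uL pL) * F1 = (\<rho>R - \<rho>L)*uWm + al*F1*(bR - bL)"
  proof -
    have "(entV1 \<Gamma> \<rho>R uR pR - entV1 \<Gamma> \<rho>L uL pL) * F1
        = lnmean \<rho>L \<rho>R * (ln \<rho>R - ln \<rho>L) * uWm + F1 * ((bR - bL) + (ln bR - ln bL)/(\<Gamma> - 1))"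
      unfolding V1j by (simp add: F1d algebra_simps)
    thus ?thesis unfolding lr aljump[symmetric] by (simp add: algebra_simps)
  qed
  have V2j: "entV2 \<Gamma> \<rho>R uR pR - entV2 \<Gamma> \<rho>L uL pL = bR*WR*uR - bL*WL*uL"
    by (simp add: entV2_def bL_def bR_def WL_def WR_def)
  have V3j: "entV3 \<Gamma> \<rho>R uR pR - entV3 \<Gamma> \<rho>L uL pL = - (bR*WR) + bL*WL"
    by (simp add: entV3_def bL_def bR_def WL_def WR_def)
  have Pj: "potential \<rho>R uR pR - potential \<rho>L uL pL = \<rho>R*WR*uR - \<rho>L*WL*uL"
    by (simp add: potential_def WL_def WR_def)
  have key: "((\<rho>R - \<rho>L)*uWm + al*F1*(bR - bL)) + (bR*WR*uR - bL*WL*uL)*F2 + (- (bR*WR) + bL*WL)*F3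
      - (\<rho>R*WR*uR - \<rho>L*WL*uL)
    = (bR - bL)*(al*F1 + uWm*F2 - Wm*F3) + (uR - uL)*(bm*(Wm + z3*Lm)*F2 - bm*Lm*F3 - rm*(Wm + z3*Lm))
      + (bm*F2*z3 - rm*z3 - bm*F3)*((WR - WL) - Lm*(uR - uL))"
    by (simp add: bm_def rm_def z3_def Wm_def uWm_def amean_def field_simps)
  have ent: "(entV1 \<Gamma> \<rho>R uR pR - entV1 \<Gamma> \<rho>L uL pL) * F1
         + (entV2 \<Gamma> \<rho>R uR pR - entV2 \<Gamma> \<rho>L uL pL) * F2
         + (entV3 \<Gamma> \<rho>R uR pR - entV3 \<Gamma> \<rho>L uL pL) * F3
         = potential \<rho>R uR pR - potential \<rho>L uL pL"
    unfolding X1 V2j V3j Pj using key A B Lj by simp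
  have cons: "F1 = \<rho>L * WL * uL \<and> F2 = \<rho>L * enthalpy \<Gamma> \<rho>L pL * WL\<^sup>2 * uL\<^sup>2 + pL
      \<and> F3 = \<rho>L * enthalpy \<Gamma> \<rho>L pL * WL\<^sup>2 * uL" if eq: "\<rho>L = \<rho>R" "uL = uR" "pL = pR"
  proof -
    define s where "s = sqrt (1 - uL\<^sup>2)"
    have s: "s > 0" "s\<^sup>2 = 1 - uL\<^sup>2" using sL s_def by auto
    have W: "WL = 1/s" "WR = 1/s" using eq by (simp_all add: WL_def WR_def lorentzW_def s_def)
    have "Lm = (uL+uL)/(s*s*(s+s))" unfolding Lm_def lorentz_mean_def s_def eq(2)[symmetric] by simp
    hence L: "Lm = uL/s^3" using s(1) by (simp add: field_simps power3_eq_cube)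
    have b: "bm = \<rho>L/pL" using eq by (simp add: bm_def bL_def bR_def amean_def)
    have r: "rm = \<rho>L" using eq by (simp add: rm_def amean_def)
    have z: "z3 = uL" using eq by (simp add: z3_def amean_def)
    have wm: "Wm = 1/s" using W by (simp add: Wm_def amean_def)
    have uw: "uWm = uL/s" using W eq by (simp add: uWm_def amean_def)
    have f1: "F1 = \<rho>L*uL/s" using eq by (simp add: F1d uw lnmean_def)
    have a: "al = 1 + pL/((\<Gamma> - 1)*\<rho>L)" using eq by (simp add: al_def fluxAlpha_def lnmean_def)
    have q: "Q = \<rho>L/(pL*s\<^sup>2)" using Qeq b W by (simp add: power2_eq_square)
    have h: "enthalpy \<Gamma> \<rho>L pL = 1 + \<Gamma> * pL / ((\<Gamma> - 1) * \<rho>L)" by (simp add: enthalpy_def)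
    have g0: "\<Gamma> - 1 \<noteq> 0" using G by simp
    have s2: "s^2 = 1 - uL^2" using s by simp
    show ?thesis
    proof (intro conjI)
      show "F1 = \<rho>L * WL * uL" using f1 W by simp
      show "F2 = \<rho>L * enthalpy \<Gamma> \<rho>L pL * WL\<^sup>2 * uL\<^sup>2 + pL"
        unfolding F2d q a b L f1 r z wm h W using s g0 pos
        by (simp add: field_simps power2_eq_square power3_eq_cube)
      show "F3 = \<rho>L * enthalpy \<Gamma> \<rho>L pL * WL\<^sup>2 * uL"
      proof -
        have "Wm + z3*Lm = (s^2 + uL^2)/s^3" unfolding wm z L using s(1)
          by (simp add: field_simps power3_eq_cube power2_eq_square)
        hence k: "Wm + z3*Lm = 1/s^3" unfolding s2 by simp
        have "F3 = (rm*uWm + al*F1*bm)*(Wm + z3*Lm)/Q" unfolding F3d by (simp add: algebra_simps)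
        also have "\<dots> = (rm*uWm + al*F1*bm)/(s^3*Q)" unfolding k by simp
        also have "\<dots> = \<rho>L * enthalpy \<Gamma> \<rho>L pL * WL\<^sup>2 * uL"
          unfolding q a b f1 r uw h W using s g0 pos
          by (simp add: field_simps power2_eq_square power3_eq_cube)
        finally show ?thesis .
      qed
    qed
  qed
  show ?thesis
    unfolding Q_def[symmetric] F1_def[symmetric] F2_def[symmetric] F3_def[symmetric]
      WL_def[symmetric] WR_def[symmetric]
    using Qeq Qpos ent cons
    by (auto simp: bm_def bL_def bR_def physflux_def Let_def WL_def power2_eq_square)
qed

end
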